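(* Let $n\ge 2$ and let $e_1,\dots,e_n$ be the standard basis vectors of $\mathbb{C}^n$; write $\iota=\sqrt{-1}$. For each $s$, $rank_{cps}(e_s\otimes e_s\otimes e_s\otimes e_s)=1$. For $s\neq t$, the tensor $\mathcal{E}^{sstt}:=e_s\otimes e_s\otimes e_t\otimes e_t+e_t\otimes e_t\otimes e_s\otimes e_s$ satisfies $rank_{cps}(\mathcal{E}^{sstt})=4$, and \[ \mathcal{E}^{sstt}=\tfrac14\Big[(e_s+e_t)^{\otimes 4}+(e_s-e_t)^{\otimes 4}-(e_s+\iota e_t)^{\otimes 2}\otimes(e_s-\iota e_t)^{\otimes 2}-(e_s-\iota e_t)^{\otimes 2}\otimes(e_s+\iota e_t)^{\otimes 2}\Big] \] is a CPS rank decomposition of it.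
   Context: A tensor $\mathcal{A}\in\mathbb{C}^{n\times n\times n\times n}$ is conjugate partial-symmetric (CPS) if $\mathcal{A}_{ijkl}=\overline{\mathcal{A}_{klij}}$ and $\mathcal{A}_{ijkl}=\mathcal{A}_{jikl}=\mathcal{A}_{ijlk}$ for all indices. Every CPS tensor can be written as $\mathcal{A}=\sum_{i=1}^r\lambda_i a_i\otimes a_i\otimes\bar a_i\otimes\bar a_i$ with $\lambda_i\in\mathbb{R}$, $a_i\in\mathbb{C}^n$ (a CPS decomposition); the smallest such $r$ is the CPS rank $rank_{cps}(\mathcal{A})$, and a CPS decomposition with $r=rank_{cps}(\mathcal{A})$ terms is a CPS rank decomposition. Here $(u\otimes v\otimes w\otimes z)_{ijkl}=u_iv_jw_kz_l$ and $x^{\otimes d}$ is the $d$-fold tensor product of $x$ with itself. *)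

theory Defs
  imports "HOL-Analysis.Analysis"
begin

text \<open>Fourth-order tensors over \<open>\<complex>^n\<close>, with the index set given by a finite type \<open>'n\<close>
  (n = CARD('n)).\<close>
type_synonym ('n) tensor4 = "'n \<Rightarrow> 'n \<Rightarrow> 'n \<Rightarrow> 'n \<Rightarrow> complex"

definition outer4 :: "complex^'n \<Rightarrow> complex^'n \<Rightarrow> complex^'n \<Rightarrow> complex^'n \<Rightarrow> ('n::finite) tensor4" where
  "outer4 u v w z = (\<lambda>i j k l. u$i * v$j * w$k * z$l)"

definition cvec_cnj :: "complex^'n \<Rightarrow> complex^'n" where
  "cvec_cnj a = (\<chi> i. cnj (a$i))"

definition is_cps :: "('n::finite) tensor4 \<Rightarrow> bool" where
  "is_cps A \<longleftrightarrow> (\<forall>i j k l. A i j k l = cnj (A k l i j) \<and> A i j k l = A j i k l \<and> A i j k l = A i j l k)"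

definition cps_sum :: "(nat \<Rightarrow> real) \<Rightarrow> (nat \<Rightarrow> complex^'n) \<Rightarrow> nat \<Rightarrow> ('n::finite) tensor4" where
  "cps_sum lam a r = (\<lambda>i j k l. \<Sum>m<r. complex_of_real (lam m) *
      outer4 (a m) (a m) (cvec_cnj (a m)) (cvec_cnj (a m)) i j k l)"

definition has_cps_decomp :: "('n::finite) tensor4 \<Rightarrow> nat \<Rightarrow> bool" where
  "has_cps_decomp A r \<longleftrightarrow> (\<exists>lam a. A = cps_sum lam a r)"

definition cps_rank :: "('n::finite) tensor4 \<Rightarrow> nat" where
  "cps_rank A = (LEAST r. has_cps_decomp A r)"

definition is_cps_rank_decomp :: "('n::finite) tensor4 \<Rightarrow> (nat \<Rightarrow> real) \<Rightarrow> (nat \<Rightarrow> complex^'n) \<Rightarrow> nat \<Rightarrow> bool" where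
  "is_cps_rank_decomp A lam a r \<longleftrightarrow> A = cps_sum lam a r \<and> r = cps_rank A"

definition tadd :: "('n::finite) tensor4 \<Rightarrow> ('n::finite) tensor4 \<Rightarrow> ('n::finite) tensor4" where
  "tadd A B = (\<lambda>i j k l. A i j k l + B i j k l)"

definition tscale :: "complex \<Rightarrow> ('n::finite) tensor4 \<Rightarrow> ('n::finite) tensor4" where
  "tscale c A = (\<lambda>i j k l. c * A i j k l)"

definition pow4 :: "complex^'n \<Rightarrow> ('n::finite) tensor4" where
  "pow4 x = outer4 x x x x"

definition pow22 :: "complex^'n \<Rightarrow> complex^'n \<Rightarrow> ('n::finite) tensor4" where
  "pow22 x y = outer4 x x y y"

end

theory Submission imports Defs begin

lemma sum_le_single:
  fixes f :: "nat \<Rightarrow> real"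
  assumes "k < 3" "\<And>m. m < 3 \<Longrightarrow> m \<noteq> k \<Longrightarrow> f m \<le> 0"
  shows "(\<Sum>m<3. f m) \<le> f k"
proof -
  have "(\<Sum>m<3. f m) = f k + (\<Sum>m\<in>{..<3} - {k}. f m)"
    using assms(1) by (simp add: sum.remove)
  moreover have "(\<Sum>m\<in>{..<3} - {k}. f m) \<le> 0"
    by (rule sum_nonpos) (use assms(2) in auto)
  ultimately show ?thesis by simp
qed

lemma core:
  fixes lam :: "nat \<Rightarrow> real" and al be :: "nat \<Rightarrow> complex" and c :: real
  assumes c: "c \<noteq> 0"
    and eq: "\<And>x w y. (\<Sum>m<3. lam m * (cmod (al m ^ 2 * x + al m * be m * w + be m ^ 2 * y))^2) = c * Re (x * cnj y)"
    and k: "k < 3" and neg: "\<And>m. m < 3 \<Longrightarrow> m \<noteq> k \<Longrightarrow> lam m \<le> 0"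
  shows False
proof -
  have le: "c * Re (x * cnj y) \<le> lam k * (cmod (al k ^ 2 * x + al k * be k * w + be k ^ 2 * y))^2" for x w y
  proof -
    have "(\<Sum>m<3. lam m * (cmod (al m ^ 2 * x + al m * be m * w + be m ^ 2 * y))^2)
        \<le> lam k * (cmod (al k ^ 2 * x + al k * be k * w + be k ^ 2 * y))^2"
      by (rule sum_le_single[OF k]) (simp add: neg mult_nonpos_nonneg)
    thus ?thesis using eq by simp
  qed
  have c2: "c^2 > 0" using c by simp
  show False
  proof (cases "al k * be k = 0")
    case False
    define w where "w = - (al k ^ 2 + be k ^ 2 * of_real c) / (al k * be k)"
    have "al k ^ 2 * 1 + al k * be k * w + be k ^ 2 * of_real c = 0"
      using False unfolding w_def by (simp add: field_simps)
    from le[where x=1 and w=w and y="of_real c"] this have "c * c \<le> 0" by simp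
    with c2 show False by (simp add: power2_eq_square)
  next
    case True
    show False
    proof (cases "al k = 0")
      case True
      define C where "C = lam k * (cmod (be k ^ 2 * of_real c))^2"
      define t where "t = (\<bar>C\<bar> + 1) / c^2"
      from le[where x="of_real t" and w=0 and y="of_real c"] True have "c * (t * c) \<le> C" unfolding C_def by simp
      moreover have "c * (t * c) = \<bar>C\<bar> + 1" unfolding t_def using c c2 by (simp add: power2_eq_square)
      ultimately show False by simp
    next
      case False
      with True have b: "be k = 0" by simp
      define C where "C = lam k * (cmod (al k ^ 2 * of_real c))^2"
      define t where "t = (\<bar>C\<bar> + 1) / c^2"
      from le[where x="of_real c" and w=0 and y="of_real t"] b have "c * (c * t) \<le> C" unfolding C_def by simp
      moreover have "c * (c * t) = \<bar>C\<bar> + 1" unfolding t_def using c c2 by (simp add: power2_eq_square)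
      ultimately show False by simp
    qed
  qed
qed

lemma sum3: "(\<Sum>m<3. f (m::nat)) = f 0 + f 1 + (f 2 :: 'a::comm_monoid_add)"
  by (simp add: numeral_3_eq_3 numeral_2_eq_2)

lemma expand1:
  fixes A B x w y :: complex
  shows "of_real l * ((A^2*x + A*B*w + B^2*y) * cnj (A^2*x + A*B*w + B^2*y)) =
    x * cnj x * (of_real l * A * A * cnj A * cnj A) + x * cnj w * (of_real l * A * A * cnj A * cnj B)
  + x * cnj y * (of_real l * A * A * cnj B * cnj B) + w * cnj x * (of_real l * A * B * cnj A * cnj A)
  + w * cnj w * (of_real l * A * B * cnj A * cnj B) + w * cnj y * (of_real l * A * B * cnj B * cnj B)
  + y * cnj x * (of_real l * B * B * cnj A * cnj A) + y * cnj w * (of_real l * B * B * cnj A * cnj B)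
  + y * cnj y * (of_real l * B * B * cnj B * cnj B)"
  by (simp add: power2_eq_square algebra_simps)

lemma no_small:
  fixes s t :: "'n::finite" and lam :: "nat \<Rightarrow> real" and a :: "nat \<Rightarrow> complex^'n"
  assumes st: "s \<noteq> t"
  assumes E: "tadd (outer4 (axis s 1) (axis s 1) (axis t 1) (axis t 1)) (outer4 (axis t 1) (axis t 1) (axis s 1) (axis s 1)) = cps_sum lam a 3"
  shows False
proof -
  define al where "al = (\<lambda>m. a m $ s)"
  define be where "be = (\<lambda>m. a m $ t)"
  define S where "S p q r v = (\<Sum>m<3. complex_of_real (lam m) * p m * q m * cnj (r m) * cnj (v m))" for p q r v
  have ent: "tadd (outer4 (axis s 1) (axis s 1) (axis t 1) (axis t 1)) (outer4 (axis t 1) (axis t 1) (axis s 1) (axis s 1)) i j k l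
     = S (\<lambda>m. a m $ i) (\<lambda>m. a m $ j) (\<lambda>m. a m $ k) (\<lambda>m. a m $ l)" for i j k l
    by (simp only: E) (simp add: S_def cps_sum_def outer4_def cvec_cnj_def mult.assoc)
  have e1: "S al al al al = 0" using ent[of s s s s] st by (simp add: tadd_def outer4_def axis_def al_def)
  have e2: "S al al al be = 0" using ent[of s s s t] st by (simp add: tadd_def outer4_def axis_def al_def be_def)
  have e3: "S al al be be = 1" using ent[of s s t t] st by (simp add: tadd_def outer4_def axis_def al_def be_def)
  have e4: "S al be al al = 0" using ent[of s t s s] st by (simp add: tadd_def outer4_def axis_def al_def be_def)
  have e5: "S al be al be = 0" using ent[of s t s t] st by (simp add: tadd_def outer4_def axis_def al_def be_def)
  have e6: "S al be be be = 0" using ent[of s t t t] st by (simp add: tadd_def outer4_def axis_def al_def be_def)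
  have e7: "S be be al al = 1" using ent[of t t s s] st by (simp add: tadd_def outer4_def axis_def al_def be_def)
  have e8: "S be be al be = 0" using ent[of t t s t] st by (simp add: tadd_def outer4_def axis_def al_def be_def)
  have e9: "S be be be be = 0" using ent[of t t t t] st by (simp add: tadd_def outer4_def axis_def be_def)
  have key: "(\<Sum>m<3. lam m * (cmod (al m ^ 2 * x + al m * be m * w + be m ^ 2 * y))^2) = 2 * Re (x * cnj y)" for x w y
  proof -
    have "complex_of_real (\<Sum>m<3. lam m * (cmod (al m ^ 2 * x + al m * be m * w + be m ^ 2 * y))^2)
       = (\<Sum>m<3. complex_of_real (lam m) * ((al m ^ 2 * x + al m * be m * w + be m ^ 2 * y) * cnj (al m ^ 2 * x + al m * be m * w + be m ^ 2 * y)))"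
      by (simp only: of_real_sum of_real_mult complex_norm_square)
    also have "\<dots> = x * cnj x * S al al al al + x * cnj w * S al al al be + x * cnj y * S al al be be
       + w * cnj x * S al be al al + w * cnj w * S al be al be + w * cnj y * S al be be be
       + y * cnj x * S be be al al + y * cnj w * S be be al be + y * cnj y * S be be be be"
      unfolding S_def sum_distrib_left expand1 sum.distrib ..
    also have "\<dots> = x * cnj y + y * cnj x" by (simp add: e1 e2 e3 e4 e5 e6 e7 e8 e9)
    also have "\<dots> = complex_of_real (2 * Re (x * cnj y))"
      by (simp add: complex_eq_iff)
    finally show ?thesis by (simp only: of_real_eq_iff)
  qed
  have "(\<exists>k<3. \<forall>m<3. m \<noteq> k \<longrightarrow> lam m \<le> 0) \<or> (\<exists>k<3. \<forall>m<3. m \<noteq> k \<longrightarrow> lam m \<ge> 0)"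
  proof -
    have m3: "m = 0 \<or> m = 1 \<or> m = 2" if "m < (3::nat)" for m using that by auto
    have w0: "\<exists>k<3. \<forall>m<3. m \<noteq> k \<longrightarrow> P m" if "P 1" "P 2" for P :: "nat \<Rightarrow> bool"
      by (rule exI[of _ 0]) (use that m3 in auto)
    have w1: "\<exists>k<3. \<forall>m<3. m \<noteq> k \<longrightarrow> P m" if "P 0" "P 2" for P :: "nat \<Rightarrow> bool"
      by (rule exI[of _ 1]) (use that m3 in auto)
    have w2: "\<exists>k<3. \<forall>m<3. m \<noteq> k \<longrightarrow> P m" if "P 0" "P 1" for P :: "nat \<Rightarrow> bool"
      by (rule exI[of _ 2]) (use that m3 in auto)
    show ?thesis
    proof (cases "lam 0 \<le> 0"; cases "lam 1 \<le> 0"; cases "lam 2 \<le> 0")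
    qed (use w0[of "\<lambda>m. lam m \<le> 0"] w1[of "\<lambda>m. lam m \<le> 0"] w2[of "\<lambda>m. lam m \<le> 0"]
             w0[of "\<lambda>m. lam m \<ge> 0"] w1[of "\<lambda>m. lam m \<ge> 0"] w2[of "\<lambda>m. lam m \<ge> 0"] in auto)
  qed
  thus False
  proof
    assume "\<exists>k<3. \<forall>m<3. m \<noteq> k \<longrightarrow> lam m \<le> 0"
    then obtain k where "k < 3" "\<And>m. m < 3 \<Longrightarrow> m \<noteq> k \<Longrightarrow> lam m \<le> 0" by blast
    from core[of 2 lam al be, OF _ key this] show False by simp
  next
    assume "\<exists>k<3. \<forall>m<3. m \<noteq> k \<longrightarrow> lam m \<ge> 0"
    then obtain k where k: "k < 3" "\<And>m. m < 3 \<Longrightarrow> m \<noteq> k \<Longrightarrow> lam m \<ge> 0" by blast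
    have key': "(\<Sum>m<3. (- lam m) * (cmod (al m ^ 2 * x + al m * be m * w + be m ^ 2 * y))^2) = (-2) * Re (x * cnj y)" for x w y
      using key[of x w y] by (simp add: sum_negf)
    from core[of "-2" "\<lambda>m. - lam m" al be, OF _ key' k(1)] k(2) show False by force
  qed
qed

lemma pad3:
  fixes A :: "('n::finite) tensor4"
  assumes "has_cps_decomp A r" "r \<le> 3"
  shows "has_cps_decomp A 3"
proof -
  obtain lam a where A: "A = cps_sum lam a r" using assms(1) unfolding has_cps_decomp_def by blast
  have "cps_sum lam a r = cps_sum (\<lambda>m. if m < r then lam m else 0) a 3"
    unfolding cps_sum_def
  proof (intro ext)
    fix i j k l :: 'n
    show "(\<Sum>m<r. complex_of_real (lam m) * outer4 (a m) (a m) (cvec_cnj (a m)) (cvec_cnj (a m)) i j k l) =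
       (\<Sum>m<3. complex_of_real (if m < r then lam m else 0) * outer4 (a m) (a m) (cvec_cnj (a m)) (cvec_cnj (a m)) i j k l)"
      by (rule sym, rule sum.mono_neutral_cong_right) (use assms(2) in auto)
  qed
  thus ?thesis using A unfolding has_cps_decomp_def by blast
qed

lemma rank_E:
  fixes s t :: "'n::finite"
  assumes st: "s \<noteq> t"
    and d4: "has_cps_decomp (tadd (outer4 (axis s 1) (axis s 1) (axis t 1) (axis t 1)) (outer4 (axis t 1) (axis t 1) (axis s 1) (axis s 1))) 4"
  shows "cps_rank (tadd (outer4 (axis s 1) (axis s 1) (axis t 1) (axis t 1)) (outer4 (axis t 1) (axis t 1) (axis s 1) (axis s 1))) = 4"
  unfolding cps_rank_def
proof (rule Least_equality)
  show "has_cps_decomp (tadd (outer4 (axis s 1) (axis s 1) (axis t 1) (axis t 1)) (outer4 (axis t 1) (axis t 1) (axis s 1) (axis s 1))) 4" by (rule d4)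
next
  fix r assume h: "has_cps_decomp (tadd (outer4 (axis s 1) (axis s 1) (axis t 1) (axis t 1)) (outer4 (axis t 1) (axis t 1) (axis s 1) (axis s 1))) r"
  show "4 \<le> r"
  proof (rule ccontr)
    assume "\<not> 4 \<le> r"
    hence "r \<le> 3" by simp
    from pad3[OF h this] obtain lam a where
      "tadd (outer4 (axis s 1) (axis s 1) (axis t 1) (axis t 1)) (outer4 (axis t 1) (axis t 1) (axis s 1) (axis s 1)) = cps_sum lam a 3"
      unfolding has_cps_decomp_def by blast
    from no_small[OF st this] show False .
  qed
qed

lemma cnj_axis: "cvec_cnj (axis s (1::complex)) = axis s 1"
  by (simp add: cvec_cnj_def axis_def vec_eq_iff)

theorem proposition3p1:
  fixes s t :: "'n::finite"
  assumes "CARD('n) \<ge> 2"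
  defines "e \<equiv> (\<lambda>q::'n. axis q (1::complex))"
  defines "E \<equiv> tadd (outer4 (e s) (e s) (e t) (e t)) (outer4 (e t) (e t) (e s) (e s))"
  shows "cps_rank (pow4 (e s)) = 1 \<and>
    (s \<noteq> t \<longrightarrow> cps_rank E = 4 \<and>
       E = tscale (1/4)
           (tadd (tadd (pow4 (e s + e t)) (pow4 (e s - e t)))
                 (tadd (tscale (-1) (pow22 (e s + \<i> *s e t) (e s - \<i> *s e t)))
                       (tscale (-1) (pow22 (e s - \<i> *s e t) (e s + \<i> *s e t))))) \<and>
       is_cps_rank_decomp E
           (\<lambda>m. [1/4, 1/4, -1/4, -1/4] ! m)
           (\<lambda>m. [e s + e t, e s - e t, e s + \<i> *s e t, e s - \<i> *s e t] ! m) 4)"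
proof (intro conjI impI)
  have d1: "has_cps_decomp (pow4 (e s)) 1"
    unfolding has_cps_decomp_def
    by (rule exI[of _ "\<lambda>_. 1"], rule exI[of _ "\<lambda>_. e s"])
       (simp add: cps_sum_def pow4_def e_def cnj_axis)
  show "cps_rank (pow4 (e s)) = 1"
    unfolding cps_rank_def
  proof (rule Least_equality)
    show "has_cps_decomp (pow4 (e s)) 1" by (rule d1)
  next
    fix r assume h: "has_cps_decomp (pow4 (e s)) r"
    show "1 \<le> r"
    proof (rule ccontr)
      assume "\<not> 1 \<le> r"
      hence "r = 0" by simp
      with h obtain lam a where "pow4 (e s) = cps_sum lam a 0" unfolding has_cps_decomp_def by blast
      hence "pow4 (e s) s s s s = 0" by (simp add: cps_sum_def)
      thus False by (simp add: pow4_def outer4_def e_def)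
    qed
  qed
next
  assume st: "s \<noteq> t"
  show eq1: "E = tscale (1/4)
           (tadd (tadd (pow4 (e s + e t)) (pow4 (e s - e t)))
                 (tadd (tscale (-1) (pow22 (e s + \<i> *s e t) (e s - \<i> *s e t)))
                       (tscale (-1) (pow22 (e s - \<i> *s e t) (e s + \<i> *s e t)))))"
  proof (intro ext)
    fix i j k l :: 'n
    show "E i j k l = tscale (1/4)
           (tadd (tadd (pow4 (e s + e t)) (pow4 (e s - e t)))
                 (tadd (tscale (-1) (pow22 (e s + \<i> *s e t) (e s - \<i> *s e t)))
                       (tscale (-1) (pow22 (e s - \<i> *s e t) (e s + \<i> *s e t))))) i j k l"
      using st unfolding E_def e_def tadd_def tscale_def pow4_def pow22_def outer4_def
      by (simp add: axis_def; simp add: algebra_simps)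
  qed
  have eq2: "E = cps_sum (\<lambda>m. [1/4, 1/4, -1/4, -1/4] ! m)
           (\<lambda>m. [e s + e t, e s - e t, e s + \<i> *s e t, e s - \<i> *s e t] ! m) 4"
  proof (intro ext)
    fix i j k l :: 'n
    show "E i j k l = cps_sum (\<lambda>m. [1/4, 1/4, -1/4, -1/4] ! m)
           (\<lambda>m. [e s + e t, e s - e t, e s + \<i> *s e t, e s - \<i> *s e t] ! m) 4 i j k l"
      using st unfolding E_def e_def cps_sum_def cvec_cnj_def tadd_def outer4_def
      by (simp add: numeral_eq_Suc axis_def; simp add: algebra_simps)
  qed
  have r4: "cps_rank E = 4"
    unfolding E_def e_def
    by (rule rank_E[OF st]) (use eq2 in \<open>auto simp: has_cps_decomp_def E_def e_def\<close>)
  show "cps_rank E = 4" by (rule r4)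
  show "is_cps_rank_decomp E
           (\<lambda>m. [1/4, 1/4, -1/4, -1/4] ! m)
           (\<lambda>m. [e s + e t, e s - e t, e s + \<i> *s e t, e s - \<i> *s e t] ! m) 4"
    unfolding is_cps_rank_decomp_def using eq2 r4 by simp
qed
end
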